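(* Let $M$ be a non-negative $n\times n$ matrix having at least one positive diagonal, and for $\lambda>0$ let $M^{(\lambda)}$ be the limit of Sinkhorn scaling of $M^{[\lambda]}$ with uniform marginals $\mathbf{r}=\mathbf{c}=(1/n,\dots,1/n)$. Then $M^{(\lambda)}$ concentrates on the leading diagonals of $M$ as $\lambda\to\infty$: for every position $(s,t)$ such that $M_{st}$ does not lie on any leading diagonal of $M$ (i.e. there is no leading diagonal $D^M_\sigma$ with $\sigma(s)=t$), $M^{(\lambda)}_{st}\to0$ as $\lambda\to\infty$.
   Context: $M^{[\lambda]}$ denotes the matrix with entries $(M_{ij})^\lambda$ (zero where $M_{ij}=0$). Sinkhorn scaling with marginals $(\mathbf{r},\mathbf{c})$ is the iterated alternation of rescaling rows to have sums $\mathbf{r}$ and columns to have sums $\mathbf{c}$. For a permutation $\sigma$ of $\{1,\dots,n\}$, the diagonal of $M$ determined by $\sigma$ is $D^M_\sigma=\{M_{1\sigma(1)},\dots,M_{n\sigma(n)}\}$; it is positive if all its entries are positive; it is a leading diagonal if the product $\prod_{i=1}^n M_{i\sigma(i)}$ is the largest among all diagonals of $M$. *)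

theory Defs
  imports "HOL-Analysis.Analysis" "HOL-Combinatorics.Permutations"
begin

definition entry_power :: "real \<Rightarrow> real^'n^'n \<Rightarrow> real^'n^'n" where
  "entry_power l M = (\<chi> i j. (M $ i $ j) powr l)"
  \<comment> \<open>M^[l]; note 0 powr l = 0, so zeros stay zero\<close>

definition row_scale :: "real^'n \<Rightarrow> real^'n^'n \<Rightarrow> real^'n^'n" where
  "row_scale r A = (\<chi> i j. A $ i $ j * r $ i / (\<Sum>k\<in>UNIV. A $ i $ k))"

definition col_scale :: "real^'n \<Rightarrow> real^'n^'n \<Rightarrow> real^'n^'n" where
  "col_scale c A = (\<chi> i j. A $ i $ j * c $ j / (\<Sum>k\<in>UNIV. A $ k $ j))"

fun sinkhorn_iter :: "real^'n \<Rightarrow> real^'n \<Rightarrow> real^'n^'n \<Rightarrow> nat \<Rightarrow> real^'n^'n" where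
  "sinkhorn_iter r c A 0 = A"
| "sinkhorn_iter r c A (Suc k) =
     (if even k then row_scale r (sinkhorn_iter r c A k)
      else col_scale c (sinkhorn_iter r c A k))"

definition sinkhorn_limit :: "real^'n \<Rightarrow> real^'n \<Rightarrow> real^'n^'n \<Rightarrow> real^'n^'n" where
  "sinkhorn_limit r c A = lim (sinkhorn_iter r c A)"

definition uniform_marginal :: "real^'n" where
  "uniform_marginal = (\<chi> i. 1 / real CARD('n))"

definition diag_prod :: "real^'n^'n \<Rightarrow> ('n \<Rightarrow> 'n) \<Rightarrow> real" where
  "diag_prod M \<sigma> = (\<Prod>i\<in>UNIV. M $ i $ \<sigma> i)"

definition positive_diagonal :: "real^'n^'n \<Rightarrow> ('n \<Rightarrow> 'n) \<Rightarrow> bool" where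
  "positive_diagonal M \<sigma> \<longleftrightarrow> \<sigma> permutes UNIV \<and> (\<forall>i. M $ i $ \<sigma> i > 0)"

definition leading_diagonal :: "real^'n^'n \<Rightarrow> ('n \<Rightarrow> 'n) \<Rightarrow> bool" where
  "leading_diagonal M \<sigma> \<longleftrightarrow> \<sigma> permutes UNIV \<and>
     (\<forall>\<tau>. \<tau> permutes UNIV \<longrightarrow> diag_prod M \<tau> \<le> diag_prod M \<sigma>)"

end

theory Submission
  imports Defs "HOL-Library.Transitive_Closure_Table" "HOL-Combinatorics.Cycles"
begin

lemma circulation_cycle:
  fixes f :: "'a::finite \<Rightarrow> 'a \<Rightarrow> real"
  assumes nn: "\<And>i j. f i j \<ge> 0"
    and bal: "\<And>i. (\<Sum>j\<in>UNIV. f i j) = (\<Sum>j\<in>UNIV. f j i)"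
    and ab: "f a b > 0" and neq: "a \<noteq> b"
  shows "\<exists>\<pi>. \<pi> permutes UNIV \<and> \<pi> a = b \<and> (\<forall>i. \<pi> i \<noteq> i \<longrightarrow> f i (\<pi> i) > 0)"
proof -
  define r where "r = (\<lambda>x y. f x y > 0)"
  define R where "R = {x. r\<^sup>*\<^sup>* b x}"
  have closed: "j \<in> R" if "i \<in> R" "f i j > 0" for i j
    using that unfolding R_def r_def by (auto intro: rtranclp.rtrancl_into_rtrancl)
  have zero_out: "f i j = 0" if "i \<in> R" "j \<notin> R" for i j
    using closed[OF that(1)] that(2) nn[of i j] by force
  have aR: "a \<in> R"
  proof (rule ccontr)
    assume anR: "a \<notin> R"
    have bR: "b \<in> R" unfolding R_def by simp
    have "(\<Sum>i\<in>R. \<Sum>j\<in>UNIV. f i j) = (\<Sum>i\<in>R. \<Sum>j\<in>UNIV. f j i)"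
      using bal by simp
    moreover have "(\<Sum>i\<in>R. \<Sum>j\<in>UNIV. f i j) = (\<Sum>i\<in>R. \<Sum>j\<in>R. f i j)"
    proof (rule sum.cong[OF refl])
      fix i assume iR: "i \<in> R"
      have "(\<Sum>j\<in>UNIV. f i j) = (\<Sum>j\<in>R. f i j) + (\<Sum>j\<in>UNIV - R. f i j)"
        using sum.subset_diff[of R UNIV "\<lambda>j. f i j"] by simp
      also have "(\<Sum>j\<in>UNIV - R. f i j) = 0"
        using zero_out[OF iR] by (intro sum.neutral) auto
      finally show "(\<Sum>j\<in>UNIV. f i j) = (\<Sum>j\<in>R. f i j)" by simp
    qed
    moreover have "(\<Sum>i\<in>R. \<Sum>j\<in>UNIV. f j i) = (\<Sum>i\<in>R. \<Sum>j\<in>R. f j i) + (\<Sum>i\<in>R. \<Sum>j\<in>UNIV - R. f j i)"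
    proof -
      have "\<And>i. (\<Sum>j\<in>UNIV. f j i) = (\<Sum>j\<in>R. f j i) + (\<Sum>j\<in>UNIV - R. f j i)"
        using sum.subset_diff[of R UNIV] by (simp add: add.commute)
      then show ?thesis by (simp add: sum.distrib)
    qed
    moreover have "(\<Sum>i\<in>R. \<Sum>j\<in>R. f j i) = (\<Sum>i\<in>R. \<Sum>j\<in>R. f i j)"
      by (rule sum.swap)
    ultimately have z: "(\<Sum>i\<in>R. \<Sum>j\<in>UNIV - R. f j i) = 0" by linarith
    have "(\<Sum>j\<in>UNIV - R. f j b) = 0"
      using z bR by (subst (asm) sum_nonneg_eq_0_iff) (auto intro: sum_nonneg nn)
    then have "f a b = 0"
      using anR by (subst (asm) sum_nonneg_eq_0_iff) (auto intro: nn)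
    with ab show False by simp
  qed
  then have "r\<^sup>*\<^sup>* b a" unfolding R_def by simp
  then obtain xs0 where "rtrancl_path r b xs0 a" by (auto simp: rtranclp_eq_rtrancl_path)
  then obtain xs where p: "rtrancl_path r b xs a" and d: "distinct (b # xs)"
    by (rule rtrancl_path_distinct)
  have xsne: "xs \<noteq> []" using p neq by (cases rule: rtrancl_path.cases) auto
  define cs where "cs = b # xs"
  define \<pi> where "\<pi> = cycle_of_list cs"
  have rot: "map \<pi> cs = rotate1 cs"
    using cyclic_rotation[of cs 1] d unfolding \<pi>_def cs_def by simp
  have lastcs: "last cs = a" using rtrancl_path_last[OF p xsne] xsne unfolding cs_def by simp
  have perm: "\<pi> permutes UNIV"
    using cycle_permutes[of cs] unfolding \<pi>_def by (rule permutes_subset) simp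
  have nth: "\<pi> (cs ! k) = cs ! (Suc k mod length cs)" if "k < length cs" for k
  proof -
    have "\<pi> (cs ! k) = map \<pi> cs ! k" using that by simp
    also have "\<dots> = rotate1 cs ! k" using rot by simp
    also have "\<dots> = cs ! (Suc k mod length cs)" using that by (rule nth_rotate1)
    finally show ?thesis .
  qed
  have lencs: "length cs = Suc (length xs)" unfolding cs_def by simp
  have pia: "\<pi> a = b"
  proof -
    have "a = cs ! length xs" using lastcs xsne unfolding cs_def by (simp add: last_conv_nth)
    then show ?thesis using nth[of "length xs"] lencs unfolding cs_def by simp
  qed
  have good: "f i (\<pi> i) > 0" if "\<pi> i \<noteq> i" for i
  proof -
    have "i \<in> set cs" using that id_outside_supp[of i cs] unfolding \<pi>_def by blast
    then obtain k where k: "k < length cs" "i = cs ! k" by (auto simp: in_set_conv_nth)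
    show ?thesis
    proof (cases "k = length xs")
      case True
      then have "i = a" using k lastcs xsne unfolding cs_def by (simp add: last_conv_nth)
      then show ?thesis using pia ab by simp
    next
      case False
      then have kl: "k < length xs" using k lencs by simp
      have "\<pi> i = cs ! Suc k" using nth[OF k(1)] k(2) kl lencs by simp
      also have "\<dots> = xs ! k" unfolding cs_def by simp
      finally have "\<pi> i = xs ! k" .
      moreover have "r ((b # xs) ! k) (xs ! k)" by (rule rtrancl_path_nth[OF p kl])
      ultimately show ?thesis using k(2) unfolding r_def cs_def by simp
    qed
  qed
  show ?thesis using perm pia good by blast
qed

lemma um_nth: "uniform_marginal $ (i::'n::finite) = 1 / real CARD('n)"
  by (simp add: uniform_marginal_def)

lemma sqr_tendsto_zero:
  fixes f :: "nat \<Rightarrow> real"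
  assumes "(\<lambda>k. (f k - c)\<^sup>2) \<longlonglongrightarrow> 0"
  shows "f \<longlonglongrightarrow> c"
proof -
  have "(\<lambda>k. sqrt ((f k - c)\<^sup>2)) \<longlonglongrightarrow> sqrt 0"
    by (rule tendsto_real_sqrt[OF assms])
  then have "(\<lambda>k. \<bar>f k - c\<bar>) \<longlonglongrightarrow> 0" by simp
  then have "(\<lambda>k. f k - c) \<longlonglongrightarrow> 0" by (simp add: tendsto_rabs_zero_iff)
  then show ?thesis by (simp add: LIM_zero_iff)
qed

lemma neg_ln_bound:
  fixes x :: real
  assumes "x > 0"
  shows "(1 - x) + (sqrt x - 1)\<^sup>2 \<le> - ln x"
proof -
  define y where "y = sqrt x"
  have y: "y > 0" "y\<^sup>2 = x" using assms unfolding y_def by auto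
  have "ln x = 2 * ln y" using y by (metis ln_realpow of_nat_numeral)
  moreover have "ln y \<le> y - 1" using y(1) by (rule ln_le_minus_one)
  ultimately have "- ln x \<ge> 2 - 2 * y" by linarith
  moreover have "(1 - x) + (sqrt x - 1)\<^sup>2 = 2 - 2 * y"
    unfolding y_def[symmetric] using y by (simp add: power2_eq_square algebra_simps)
  ultimately show ?thesis by linarith
qed

lemma logsum_bound:
  fixes x :: "'n::finite \<Rightarrow> real"
  assumes pos: "\<And>i. x i > 0" and sm: "(\<Sum>i\<in>UNIV. x i) = real CARD('n)"
  shows "(sqrt (x i0) - 1)\<^sup>2 \<le> - (\<Sum>i\<in>UNIV. ln (x i))"
proof -
  have "(sqrt (x i0) - 1)\<^sup>2 \<le> (\<Sum>i\<in>UNIV. (sqrt (x i) - 1)\<^sup>2)"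
    by (rule member_le_sum) auto
  also have "\<dots> = (\<Sum>i\<in>UNIV. (1 - x i) + (sqrt (x i) - 1)\<^sup>2)"
    using sm by (simp add: sum.distrib sum_subtractf)
  also have "\<dots> \<le> (\<Sum>i\<in>UNIV. - ln (x i))"
    by (rule sum_mono) (rule neg_ln_bound[OF pos])
  also have "\<dots> = - (\<Sum>i\<in>UNIV. ln (x i))" by (simp add: sum_negf)
  finally show ?thesis .
qed

lemma entry_ineq:
  fixes l p :: real
  assumes "0 \<le> l" "0 \<le> p" "0 < l \<Longrightarrow> 0 < p"
  shows "(sqrt l - sqrt p)\<^sup>2 + l - p \<le> (if 0 < l then l * ln l else 0) - (if 0 < l then l * ln p else 0)"
proof (cases "0 < l")
  case False
  then have "l = 0" using assms by simp
  then show ?thesis using assms by simp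
next
  case True
  then have pp: "0 < p" using assms by simp
  define a where "a = sqrt l"
  define b where "b = sqrt p"
  have a: "a > 0" "a\<^sup>2 = l" using True unfolding a_def by auto
  have b: "b > 0" "b\<^sup>2 = p" using pp unfolding b_def by auto
  have "ln l = 2 * ln a" using a by (metis ln_realpow of_nat_numeral)
  moreover have "ln p = 2 * ln b" using b by (metis ln_realpow of_nat_numeral)
  moreover have "ln (b / a) \<le> b / a - 1" using a b by (intro ln_le_minus_one) simp
  moreover have "ln (b / a) = ln b - ln a" using a b by (simp add: ln_div)
  ultimately have "ln l - ln p \<ge> 2 - 2 * (b / a)" by linarith
  then have "l * (ln l - ln p) \<ge> l * (2 - 2 * (b / a))"
    using True by (intro mult_left_mono) auto
  moreover have "l * (2 - 2 * (b / a)) = 2 * a\<^sup>2 - 2 * a * b"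
    using a by (simp add: power2_eq_square field_simps)
  moreover have "(sqrt l - sqrt p)\<^sup>2 + l - p = 2 * a\<^sup>2 - 2 * a * b"
    unfolding a_def[symmetric] b_def[symmetric] using a b by (simp add: power2_eq_square algebra_simps)
  ultimately show ?thesis using True by (simp add: algebra_simps)
qed

lemma bounded_mat:
  fixes X :: "'a \<Rightarrow> real^'n^'m"
  assumes "\<And>k i j. \<bar>X k $ i $ j\<bar> \<le> 1"
  shows "bounded (range X)"
proof -
  have "norm (X k) \<le> real CARD('m) * real CARD('n)" for k
  proof -
    have "norm (X k) \<le> (\<Sum>i\<in>UNIV. \<bar>norm (X k $ i)\<bar>)"
      unfolding norm_vec_def by (rule L2_set_le_sum_abs)
    also have "\<dots> \<le> (\<Sum>i\<in>(UNIV::'m set). real CARD('n))"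
    proof (rule sum_mono)
      fix i
      have "norm (X k $ i) \<le> (\<Sum>j\<in>UNIV. \<bar>norm (X k $ i $ j)\<bar>)"
        unfolding norm_vec_def by (rule L2_set_le_sum_abs)
      also have "\<dots> \<le> (\<Sum>j\<in>(UNIV::'n set). 1)"
        using assms by (intro sum_mono) simp
      finally show "\<bar>norm (X k $ i)\<bar> \<le> real CARD('n)" by simp
    qed
    finally show ?thesis by simp
  qed
  then show ?thesis unfolding bounded_iff by blast
qed

locale sk =
  fixes A :: "real^'n^'n" and s0 :: "'n \<Rightarrow> 'n"
  assumes A_nn: "\<And>i j. A $ i $ j \<ge> 0"
    and s0_perm: "s0 permutes UNIV"
    and A_diag: "\<And>i. A $ i $ s0 i > 0"
begin

definition P :: "nat \<Rightarrow> real^'n^'n" where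
  "P k = sinkhorn_iter uniform_marginal uniform_marginal A k"
definition rs :: "nat \<Rightarrow> 'n \<Rightarrow> real" where
  "rs k i = (\<Sum>j\<in>UNIV. P k $ i $ j)"
definition cs :: "nat \<Rightarrow> 'n \<Rightarrow> real" where
  "cs k j = (\<Sum>i\<in>UNIV. P k $ i $ j)"

lemma Npos: "real CARD('n) > 0" by simp

lemma P_0: "P 0 = A" by (simp add: P_def)

lemma P_Suc_even: "even k \<Longrightarrow> P (Suc k) $ i $ j = P k $ i $ j / (real CARD('n) * rs k i)"
  by (simp add: P_def rs_def row_scale_def um_nth)

lemma P_Suc_odd: "odd k \<Longrightarrow> P (Suc k) $ i $ j = P k $ i $ j / (real CARD('n) * cs k j)"
  by (simp add: P_def cs_def col_scale_def um_nth)

lemma s0_inv: "s0 (inv s0 j) = j"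
  using s0_perm by (simp add: permutes_inverses(1))

lemma scaled:
  "\<exists>x y. (\<forall>i. x i > 0) \<and> (\<forall>j. y j > (0::real)) \<and> (\<forall>i j. P k $ i $ j = x i * A $ i $ j * y j)"
proof (induction k)
  case 0
  show ?case by (rule exI[of _ "\<lambda>_. 1"], rule exI[of _ "\<lambda>_. 1"]) (simp add: P_0)
next
  case (Suc k)
  then obtain x y where x: "\<And>i. x i > (0::real)" and y: "\<And>j. y j > (0::real)"
    and xy: "\<And>i j. P k $ i $ j = x i * A $ i $ j * y j" by blast
  have nn: "P k $ i $ j \<ge> 0" for i j
    using x[of i] y[of j] A_nn[of i j] xy[of i j] by simp
  have dp: "P k $ i $ s0 i > 0" for i
    using x[of i] y[of "s0 i"] A_diag[of i] xy[of i "s0 i"] by simp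
  have rpos: "rs k i > 0" for i
  proof -
    have "P k $ i $ s0 i \<le> rs k i" unfolding rs_def by (rule member_le_sum) (auto intro: nn)
    then show ?thesis using dp[of i] by simp
  qed
  have cpos: "cs k j > 0" for j
  proof -
    have "P k $ inv s0 j $ s0 (inv s0 j) \<le> cs k (s0 (inv s0 j))" unfolding cs_def
      by (rule member_le_sum) (auto intro: nn)
    then show ?thesis using dp[of "inv s0 j"] s0_inv[of j] by simp
  qed
  show ?case
  proof (cases "even k")
    case True
    show ?thesis
      apply (rule exI[of _ "\<lambda>i. x i / (real CARD('n) * rs k i)"], rule exI[of _ y])
      using x y rpos True by (simp add: P_Suc_even xy)
  next
    case False
    show ?thesis
      apply (rule exI[of _ x], rule exI[of _ "\<lambda>j. y j / (real CARD('n) * cs k j)"])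
      using x y cpos False by (simp add: P_Suc_odd xy)
  qed
qed

lemma P_nn: "P k $ i $ j \<ge> 0"
  using scaled[of k] A_nn[of i j] by (metis mult_nonneg_nonneg less_imp_le)

lemma P_pos: "A $ i $ j > 0 \<Longrightarrow> P k $ i $ j > 0"
  using scaled[of k] by (metis mult_pos_pos)

lemma P_zero: "A $ i $ j = 0 \<Longrightarrow> P k $ i $ j = 0"
  using scaled[of k] by (metis mult_zero_left mult_zero_right)

lemma rs_pos: "rs k i > 0"
proof -
  have "P k $ i $ s0 i \<le> rs k i" unfolding rs_def by (rule member_le_sum) (auto intro: P_nn)
  then show ?thesis using P_pos[OF A_diag[of i], of k] by simp
qed

lemma cs_pos: "cs k j > 0"
proof -
  have "P k $ inv s0 j $ s0 (inv s0 j) \<le> cs k (s0 (inv s0 j))" unfolding cs_def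
    by (rule member_le_sum) (auto intro: P_nn)
  then show ?thesis using P_pos[OF A_diag[of "inv s0 j"], of k] s0_inv[of j] by simp
qed

lemma rs_odd: "odd k \<Longrightarrow> rs k i = 1 / real CARD('n)"
proof -
  assume "odd k"
  then obtain m where m: "k = Suc m" "even m" by (metis odd_Suc_minus_one even_Suc)
  have "rs k i = (\<Sum>j\<in>UNIV. P m $ i $ j) / (real CARD('n) * rs m i)"
    unfolding rs_def[of k] using m by (simp add: P_Suc_even sum_divide_distrib)
  also have "\<dots> = 1 / real CARD('n)" using rs_pos[of m i] unfolding rs_def[symmetric] by simp
  finally show ?thesis .
qed

lemma cs_even: "even k \<Longrightarrow> k \<noteq> 0 \<Longrightarrow> cs k j = 1 / real CARD('n)"
proof -
  assume "even k" "k \<noteq> 0"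
  then obtain m where m: "k = Suc m" "odd m" by (metis even_Suc not0_implies_Suc)
  have "cs k j = (\<Sum>i\<in>UNIV. P m $ i $ j) / (real CARD('n) * cs m j)"
    unfolding cs_def[of k] using m by (simp add: P_Suc_odd sum_divide_distrib)
  also have "\<dots> = 1 / real CARD('n)" using cs_pos[of m j] unfolding cs_def[symmetric] by simp
  finally show ?thesis .
qed

lemma sum_rs_cs: "(\<Sum>i\<in>UNIV. rs k i) = (\<Sum>j\<in>UNIV. cs k j)"
  unfolding rs_def cs_def by (rule sum.swap)

lemma total: "k \<noteq> 0 \<Longrightarrow> (\<Sum>i\<in>UNIV. rs k i) = 1"
proof (cases "even k")
  case True
  assume "k \<noteq> 0"
  then show ?thesis using True by (simp add: sum_rs_cs cs_even)
next
  case False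
  then show ?thesis by (simp add: rs_odd)
qed

lemma P_le1: "k \<noteq> 0 \<Longrightarrow> P k $ i $ j \<le> 1"
proof -
  assume k: "k \<noteq> 0"
  have "P k $ i $ j \<le> rs k i" unfolding rs_def by (rule member_le_sum) (auto intro: P_nn)
  also have "\<dots> \<le> (\<Sum>i\<in>UNIV. rs k i)" by (rule member_le_sum) (auto intro: less_imp_le rs_pos)
  finally show ?thesis using total[OF k] by simp
qed


definition adm :: "real^'n^'n \<Rightarrow> bool" where
  "adm Q \<longleftrightarrow> (\<forall>i j. Q $ i $ j \<ge> 0) \<and> (\<forall>i. (\<Sum>j\<in>UNIV. Q $ i $ j) = 1 / real CARD('n))
     \<and> (\<forall>j. (\<Sum>i\<in>UNIV. Q $ i $ j) = 1 / real CARD('n)) \<and> (\<forall>i j. Q $ i $ j > 0 \<longrightarrow> A $ i $ j > 0)"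

definition G :: "nat \<Rightarrow> real^'n^'n \<Rightarrow> real" where
  "G k Q = (\<Sum>i\<in>UNIV. \<Sum>j\<in>UNIV. if Q $ i $ j > 0 then Q $ i $ j * ln (P k $ i $ j) else 0)"

definition dl :: "nat \<Rightarrow> real" where
  "dl k = (if even k then - (\<Sum>i\<in>UNIV. ln (real CARD('n) * rs k i)) / real CARD('n)
           else - (\<Sum>j\<in>UNIV. ln (real CARD('n) * cs k j)) / real CARD('n))"

lemma G_step:
  assumes Q: "adm Q"
  shows "G (Suc k) Q = G k Q + dl k"
proof (cases "even k")
  case True
  have e: "(if Q $ i $ j > 0 then Q $ i $ j * ln (P (Suc k) $ i $ j) else 0)
      = (if Q $ i $ j > 0 then Q $ i $ j * ln (P k $ i $ j) else 0) - Q $ i $ j * ln (real CARD('n) * rs k i)" for i j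
  proof (cases "Q $ i $ j > 0")
    case True
    then have "A $ i $ j > 0" using Q unfolding adm_def by blast
    then have "P k $ i $ j > 0" by (rule P_pos)
    moreover have "real CARD('n) * rs k i > 0" using rs_pos[of k i] by simp
    ultimately show ?thesis using True \<open>even k\<close> rs_pos[of k i]
      by (simp add: P_Suc_even ln_div ln_mult algebra_simps)
  next
    case False
    then have "Q $ i $ j = 0" using Q unfolding adm_def by (meson antisym not_le)
    then show ?thesis by simp
  qed
  have "G (Suc k) Q = G k Q - (\<Sum>i\<in>UNIV. \<Sum>j\<in>UNIV. Q $ i $ j * ln (real CARD('n) * rs k i))"
    unfolding G_def e by (simp add: sum_subtractf)
  also have "(\<Sum>i\<in>UNIV. \<Sum>j\<in>UNIV. Q $ i $ j * ln (real CARD('n) * rs k i))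
      = (\<Sum>i\<in>UNIV. ln (real CARD('n) * rs k i) / real CARD('n))"
    using Q unfolding adm_def by (simp add: sum_distrib_right[symmetric])
  also have "\<dots> = (\<Sum>i\<in>UNIV. ln (real CARD('n) * rs k i)) / real CARD('n)"
    by (simp add: sum_divide_distrib)
  finally show ?thesis using True unfolding dl_def by simp
next
  case False
  have e: "(if Q $ i $ j > 0 then Q $ i $ j * ln (P (Suc k) $ i $ j) else 0)
      = (if Q $ i $ j > 0 then Q $ i $ j * ln (P k $ i $ j) else 0) - Q $ i $ j * ln (real CARD('n) * cs k j)" for i j
  proof (cases "Q $ i $ j > 0")
    case True
    then have "A $ i $ j > 0" using Q unfolding adm_def by blast
    then have "P k $ i $ j > 0" by (rule P_pos)
    moreover have "real CARD('n) * cs k j > 0" using cs_pos[of k j] by simp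
    ultimately show ?thesis using True \<open>odd k\<close> cs_pos[of k j]
      by (simp add: P_Suc_odd ln_div ln_mult algebra_simps)
  next
    case False
    then have "Q $ i $ j = 0" using Q unfolding adm_def by (meson antisym not_le)
    then show ?thesis by simp
  qed
  have "G (Suc k) Q = G k Q - (\<Sum>i\<in>UNIV. \<Sum>j\<in>UNIV. Q $ i $ j * ln (real CARD('n) * cs k j))"
    unfolding G_def e by (simp add: sum_subtractf)
  also have "(\<Sum>i\<in>UNIV. \<Sum>j\<in>UNIV. Q $ i $ j * ln (real CARD('n) * cs k j))
      = (\<Sum>j\<in>UNIV. \<Sum>i\<in>UNIV. Q $ i $ j * ln (real CARD('n) * cs k j))"
    by (rule sum.swap)
  also have "\<dots> = (\<Sum>j\<in>UNIV. ln (real CARD('n) * cs k j) / real CARD('n))"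
    using Q unfolding adm_def by (simp add: sum_distrib_right[symmetric])
  also have "\<dots> = (\<Sum>j\<in>UNIV. ln (real CARD('n) * cs k j)) / real CARD('n)"
    by (simp add: sum_divide_distrib)
  finally show ?thesis using False unfolding dl_def by simp
qed

lemma dl_bound:
  assumes k: "k \<noteq> 0"
  shows "(sqrt (real CARD('n) * rs k i) - 1)\<^sup>2 \<le> real CARD('n) * dl k
       \<and> (sqrt (real CARD('n) * cs k j) - 1)\<^sup>2 \<le> real CARD('n) * dl k"
proof (cases "even k")
  case True
  have sm: "(\<Sum>i\<in>UNIV. real CARD('n) * rs k i) = real CARD('n)"
    using total[OF k] by (simp add: sum_distrib_left[symmetric])
  have b: "(sqrt (real CARD('n) * rs k i) - 1)\<^sup>2 \<le> - (\<Sum>i\<in>UNIV. ln (real CARD('n) * rs k i))"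
    by (rule logsum_bound[OF _ sm]) (simp add: rs_pos)
  have "real CARD('n) * dl k = - (\<Sum>i\<in>UNIV. ln (real CARD('n) * rs k i))"
    using True unfolding dl_def by simp
  moreover have "(sqrt (real CARD('n) * cs k j) - 1)\<^sup>2 = 0" using cs_even[OF True k] by simp
  ultimately show ?thesis using b by (metis zero_le_power2 order_trans)
next
  case False
  have sm: "(\<Sum>j\<in>UNIV. real CARD('n) * cs k j) = real CARD('n)"
    using total[OF k] sum_rs_cs[of k] by (simp add: sum_distrib_left[symmetric])
  have b: "(sqrt (real CARD('n) * cs k j) - 1)\<^sup>2 \<le> - (\<Sum>j\<in>UNIV. ln (real CARD('n) * cs k j))"
    by (rule logsum_bound[OF _ sm]) (simp add: cs_pos)
  have "real CARD('n) * dl k = - (\<Sum>j\<in>UNIV. ln (real CARD('n) * cs k j))"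
    using False unfolding dl_def by simp
  moreover have "(sqrt (real CARD('n) * rs k i) - 1)\<^sup>2 = 0" using rs_odd[OF False] by simp
  ultimately show ?thesis using b by (metis zero_le_power2 order_trans)
qed

lemma dl_nn: "k \<noteq> 0 \<Longrightarrow> dl k \<ge> 0"
proof -
  assume k: "k \<noteq> 0"
  obtain i :: 'n where True by simp
  have "0 \<le> real CARD('n) * dl k"
    using dl_bound[OF k, of i i] by (metis zero_le_power2 order_trans)
  then show ?thesis by (simp add: zero_le_mult_iff)
qed

definition Q0 :: "real^'n^'n" where
  "Q0 = (\<chi> i j. if j = s0 i then 1 / real CARD('n) else 0)"

lemma adm_Q0: "adm Q0"
proof -
  have c: "(\<Sum>i\<in>UNIV. Q0 $ i $ j) = 1 / real CARD('n)" for j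
  proof -
    have "(\<Sum>i\<in>UNIV. Q0 $ i $ j) = (\<Sum>i\<in>UNIV. if i = inv s0 j then 1 / real CARD('n) else 0)"
      unfolding Q0_def using s0_perm
      by (intro sum.cong refl) (auto simp: permutes_inverses)
    then show ?thesis by simp
  qed
  show ?thesis unfolding adm_def using c A_diag
    by (auto simp: Q0_def split: if_splits)
qed

lemma G_le0: "k \<noteq> 0 \<Longrightarrow> adm Q \<Longrightarrow> G k Q \<le> 0"
  unfolding G_def
proof (intro sum_nonpos)
  fix i j assume k: "k \<noteq> 0" and Q: "adm Q"
  show "(if Q $ i $ j > 0 then Q $ i $ j * ln (P k $ i $ j) else 0) \<le> 0"
  proof (cases "Q $ i $ j > 0")
    case True
    then have "P k $ i $ j > 0" using Q P_pos unfolding adm_def by blast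
    then have "ln (P k $ i $ j) \<le> 0" using P_le1[OF k] by simp
    then show ?thesis using True by (simp add: mult_nonneg_nonpos)
  qed simp
qed

lemma G_tele: "adm Q \<Longrightarrow> G (Suc m) Q = G (Suc 0) Q + (\<Sum>i<m. dl (Suc i))"
  by (induction m) (simp_all add: G_step)

lemma dl_lim: "dl \<longlonglongrightarrow> 0"
proof -
  have "summable (\<lambda>i. dl (Suc i))"
  proof (rule summableI_nonneg_bounded)
    show "0 \<le> dl (Suc i)" for i by (rule dl_nn) simp
    show "(\<Sum>i<m. dl (Suc i)) \<le> - G (Suc 0) Q0" for m
      using G_tele[OF adm_Q0, of m] G_le0[OF _ adm_Q0, of "Suc m"] by simp
  qed
  then have "(\<lambda>i. dl (Suc i)) \<longlonglongrightarrow> 0" by (rule summable_LIMSEQ_zero)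
  then show ?thesis by (simp add: filterlim_sequentially_Suc)
qed

lemma sqrt_lim:
  fixes z :: "nat \<Rightarrow> real"
  assumes nn: "\<And>k. z k \<ge> 0"
    and b: "\<And>k. k \<noteq> 0 \<Longrightarrow> (sqrt (real CARD('n) * z k) - 1)\<^sup>2 \<le> real CARD('n) * dl k"
  shows "z \<longlonglongrightarrow> 1 / real CARD('n)"
proof -
  have "(\<lambda>k. (sqrt (real CARD('n) * z k) - 1)\<^sup>2) \<longlonglongrightarrow> 0"
  proof (rule tendsto_sandwich[of "\<lambda>_. 0" _ _ "\<lambda>k. real CARD('n) * dl k"])
    show "\<forall>\<^sub>F k in sequentially. 0 \<le> (sqrt (real CARD('n) * z k) - 1)\<^sup>2" by simp
    show "\<forall>\<^sub>F k in sequentially. (sqrt (real CARD('n) * z k) - 1)\<^sup>2 \<le> real CARD('n) * dl k"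
      using b by (auto simp: eventually_sequentially intro!: exI[of _ 1])
    show "(\<lambda>k. real CARD('n) * dl k) \<longlonglongrightarrow> 0"
      using tendsto_mult_right_zero[OF dl_lim] by simp
  qed simp
  then have "(\<lambda>k. sqrt (real CARD('n) * z k)) \<longlonglongrightarrow> 1" by (rule sqr_tendsto_zero)
  then have "(\<lambda>k. (sqrt (real CARD('n) * z k))\<^sup>2 / real CARD('n)) \<longlonglongrightarrow> 1\<^sup>2 / real CARD('n)"
    by (intro tendsto_intros) auto
  moreover have "(sqrt (real CARD('n) * z k))\<^sup>2 / real CARD('n) = z k" for k
    using nn[of k] by simp
  ultimately show ?thesis by simp
qed

lemma rs_lim: "(\<lambda>k. rs k i) \<longlonglongrightarrow> 1 / real CARD('n)"
  by (rule sqrt_lim) (auto intro: less_imp_le rs_pos dl_bound[THEN conjunct1])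

lemma cs_lim: "(\<lambda>k. cs k j) \<longlonglongrightarrow> 1 / real CARD('n)"
  by (rule sqrt_lim) (auto intro: less_imp_le cs_pos dl_bound[THEN conjunct2])


lemma G_mono:
  assumes Q: "adm Q" and k: "k \<noteq> 0"
  shows "k \<le> m \<Longrightarrow> G k Q \<le> G m Q"
proof (induction m)
  case 0 then show ?case by simp
next
  case (Suc m)
  show ?case
  proof (cases "k = Suc m")
    case True then show ?thesis by simp
  next
    case False
    then have km: "k \<le> m" using Suc.prems by simp
    then have "G k Q \<le> G m Q" by (rule Suc.IH)
    moreover have "m \<noteq> 0" using km k by simp
    ultimately show ?thesis using G_step[OF Q, of m] dl_nn[of m] by simp
  qed
qed

lemma P_conv: "\<exists>L. P \<longlonglongrightarrow> L \<and> adm L"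
proof -
  have "bounded (range (\<lambda>k. P (Suc k)))"
    by (rule bounded_mat) (simp add: abs_le_iff P_le1 order_trans[OF _ P_nn])
  then obtain L \<psi>0 where sm0: "strict_mono \<psi>0" and lim0: "((\<lambda>k. P (Suc k)) \<circ> \<psi>0) \<longlonglongrightarrow> L"
    using bounded_imp_convergent_subsequence by blast
  define \<psi> where "\<psi> m = Suc (\<psi>0 m)" for m
  have sm: "strict_mono \<psi>" using sm0 unfolding \<psi>_def strict_mono_def by simp
  have lim: "(\<lambda>m. P (\<psi> m)) \<longlonglongrightarrow> L" using lim0 unfolding \<psi>_def comp_def by simp
  have psi0: "\<psi> m \<noteq> 0" for m unfolding \<psi>_def by simp
  have psige: "m \<le> \<psi> m" for m using seq_suble[OF sm] .
  have limij: "(\<lambda>m. P (\<psi> m) $ i $ j) \<longlonglongrightarrow> L $ i $ j" for i j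
    by (intro tendsto_vec_nth lim)
  have Lnn: "L $ i $ j \<ge> 0" for i j
    by (rule LIMSEQ_le_const[OF limij]) (auto intro: P_nn)
  have Lrow: "(\<Sum>j\<in>UNIV. L $ i $ j) = 1 / real CARD('n)" for i
  proof -
    have "(\<lambda>m. rs (\<psi> m) i) \<longlonglongrightarrow> (\<Sum>j\<in>UNIV. L $ i $ j)"
      unfolding rs_def by (intro tendsto_sum limij)
    moreover have "(\<lambda>m. rs (\<psi> m) i) \<longlonglongrightarrow> 1 / real CARD('n)"
      using LIMSEQ_subseq_LIMSEQ[OF rs_lim sm] by (simp add: comp_def)
    ultimately show ?thesis by (rule LIMSEQ_unique)
  qed
  have Lcol: "(\<Sum>i\<in>UNIV. L $ i $ j) = 1 / real CARD('n)" for j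
  proof -
    have "(\<lambda>m. cs (\<psi> m) j) \<longlonglongrightarrow> (\<Sum>i\<in>UNIV. L $ i $ j)"
      unfolding cs_def by (intro tendsto_sum limij)
    moreover have "(\<lambda>m. cs (\<psi> m) j) \<longlonglongrightarrow> 1 / real CARD('n)"
      using LIMSEQ_subseq_LIMSEQ[OF cs_lim sm] by (simp add: comp_def)
    ultimately show ?thesis by (rule LIMSEQ_unique)
  qed
  have Lsupp: "A $ i $ j > 0" if "L $ i $ j > 0" for i j
  proof (rule ccontr)
    assume "\<not> A $ i $ j > 0"
    then have "A $ i $ j = 0" using A_nn[of i j] by simp
    then have "(\<lambda>m. P (\<psi> m) $ i $ j) = (\<lambda>_. 0)" by (simp add: P_zero)
    then have "L $ i $ j = 0" using limij[of i j] by (simp add: LIMSEQ_const_iff)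
    with that show False by simp
  qed
  have admL: "adm L" unfolding adm_def using Lnn Lrow Lcol Lsupp by blast
  define H where "H = (\<Sum>i\<in>UNIV. \<Sum>j\<in>UNIV. if L $ i $ j > 0 then L $ i $ j * ln (L $ i $ j) else 0)"
  have GH: "(\<lambda>m. G (\<psi> m) L) \<longlonglongrightarrow> H"
    unfolding G_def H_def
  proof (intro tendsto_sum)
    fix i j
    show "(\<lambda>m. if L $ i $ j > 0 then L $ i $ j * ln (P (\<psi> m) $ i $ j) else 0)
          \<longlonglongrightarrow> (if L $ i $ j > 0 then L $ i $ j * ln (L $ i $ j) else 0)"
    proof (cases "L $ i $ j > 0")
      case True
      have "(\<lambda>m. L $ i $ j * ln (P (\<psi> m) $ i $ j)) \<longlonglongrightarrow> L $ i $ j * ln (L $ i $ j)"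
        using True by (intro tendsto_intros limij) simp
      then show ?thesis using True by simp
    qed simp
  qed
  have GleH: "G (Suc k) L \<le> H" for k
  proof (rule LIMSEQ_le_const[OF GH])
    show "\<exists>N. \<forall>m\<ge>N. G (Suc k) L \<le> G (\<psi> m) L"
      by (rule exI[of _ "Suc k"]) (auto intro!: G_mono[OF admL] order_trans[OF _ psige])
  qed
  have "incseq (\<lambda>k. G (Suc k) L)"
    by (rule incseq_SucI) (simp add: G_step[OF admL] dl_nn)
  then obtain l where l: "(\<lambda>k. G (Suc k) L) \<longlonglongrightarrow> l"
    using GleH by (metis incseq_convergent)
  then have l': "(\<lambda>k. G k L) \<longlonglongrightarrow> l" using filterlim_sequentially_Suc[of "\<lambda>k. G k L"] by simp
  have "(\<lambda>m. G (\<psi> m) L) \<longlonglongrightarrow> l"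
    using LIMSEQ_subseq_LIMSEQ[OF l' sm] by (simp add: comp_def)
  with GH have lH: "l = H" using LIMSEQ_unique by blast
  have Dlim: "(\<lambda>k. H - G k L) \<longlonglongrightarrow> 0"
    using tendsto_diff[OF tendsto_const[of H] l'] lH by simp
  have hel: "(sqrt (L $ i $ j) - sqrt (P k $ i $ j))\<^sup>2 \<le> H - G k L" if k: "k \<noteq> 0" for k i j
  proof -
    have "(sqrt (L $ i $ j) - sqrt (P k $ i $ j))\<^sup>2
        \<le> (\<Sum>j\<in>UNIV. (sqrt (L $ i $ j) - sqrt (P k $ i $ j))\<^sup>2)"
      by (rule member_le_sum) auto
    also have "\<dots> \<le> (\<Sum>i\<in>UNIV. \<Sum>j\<in>UNIV. (sqrt (L $ i $ j) - sqrt (P k $ i $ j))\<^sup>2)"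
      by (rule member_le_sum) (auto intro: sum_nonneg)
    also have "\<dots> = (\<Sum>i\<in>UNIV. \<Sum>j\<in>UNIV. (sqrt (L $ i $ j) - sqrt (P k $ i $ j))\<^sup>2 + L $ i $ j - P k $ i $ j)"
    proof -
      have "(\<Sum>i\<in>UNIV. \<Sum>j\<in>UNIV. L $ i $ j) = 1" using Lrow by simp
      moreover have "(\<Sum>i\<in>UNIV. \<Sum>j\<in>UNIV. P k $ i $ j) = 1" using total[OF k] unfolding rs_def .
      ultimately show ?thesis by (simp add: sum.distrib sum_subtractf)
    qed
    also have "\<dots> \<le> (\<Sum>i\<in>UNIV. \<Sum>j\<in>UNIV. (if 0 < L $ i $ j then L $ i $ j * ln (L $ i $ j) else 0)
                   - (if 0 < L $ i $ j then L $ i $ j * ln (P k $ i $ j) else 0))"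
      by (intro sum_mono entry_ineq Lnn P_nn P_pos Lsupp)
    also have "\<dots> = H - G k L" unfolding H_def G_def by (simp add: sum_subtractf)
    finally show ?thesis .
  qed
  have "(\<lambda>k. P k $ i $ j) \<longlonglongrightarrow> L $ i $ j" for i j
  proof -
    have "(\<lambda>k. (sqrt (P k $ i $ j) - sqrt (L $ i $ j))\<^sup>2) \<longlonglongrightarrow> 0"
    proof (rule tendsto_sandwich[of "\<lambda>_. 0" _ _ "\<lambda>k. H - G k L"])
      show "\<forall>\<^sub>F k in sequentially. (sqrt (P k $ i $ j) - sqrt (L $ i $ j))\<^sup>2 \<le> H - G k L"
        using hel by (auto simp: eventually_sequentially power2_commute intro!: exI[of _ 1])
    qed (auto simp: Dlim)
    then have "(\<lambda>k. sqrt (P k $ i $ j)) \<longlonglongrightarrow> sqrt (L $ i $ j)" by (rule sqr_tendsto_zero)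
    then have "(\<lambda>k. (sqrt (P k $ i $ j))\<^sup>2) \<longlonglongrightarrow> (sqrt (L $ i $ j))\<^sup>2" by (rule tendsto_power)
    then show ?thesis using Lnn[of i j] by (simp add: P_nn)
  qed
  then have "P \<longlonglongrightarrow> L" by (intro vec_tendstoI)
  with admL show ?thesis by blast
qed


lemma P_cycle:
  assumes it: "inj_on \<tau> C" and isg: "inj_on \<sigma> C" and im: "\<tau> ` C = \<sigma> ` C"
  shows "(\<Prod>i\<in>C. P k $ i $ \<tau> i) * (\<Prod>i\<in>C. A $ i $ \<sigma> i)
       = (\<Prod>i\<in>C. P k $ i $ \<sigma> i) * (\<Prod>i\<in>C. A $ i $ \<tau> i)"
proof -
  obtain x y where xy: "\<And>i j. P k $ i $ j = x i * A $ i $ j * y j"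
    using scaled[of k] by blast
  have ty: "(\<Prod>i\<in>C. y (\<tau> i)) = (\<Prod>i\<in>C. y (\<sigma> i))"
  proof -
    have "(\<Prod>i\<in>C. y (\<tau> i)) = (\<Prod>j\<in>\<tau> ` C. y j)" using prod.reindex[OF it, of y] by simp
    also have "\<dots> = (\<Prod>j\<in>\<sigma> ` C. y j)" using im by simp
    also have "\<dots> = (\<Prod>i\<in>C. y (\<sigma> i))" using prod.reindex[OF isg, of y] by simp
    finally show ?thesis .
  qed
  show ?thesis
    unfolding xy prod.distrib ty by (simp add: ac_simps)
qed

lemma limit_props:
  "(\<forall>i j. sinkhorn_limit uniform_marginal uniform_marginal A $ i $ j \<ge> 0)
   \<and> (\<forall>i. (\<Sum>j\<in>UNIV. sinkhorn_limit uniform_marginal uniform_marginal A $ i $ j) = 1 / real CARD('n))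
   \<and> (\<forall>j. (\<Sum>i\<in>UNIV. sinkhorn_limit uniform_marginal uniform_marginal A $ i $ j) = 1 / real CARD('n))
   \<and> (\<forall>C \<tau> \<sigma>. inj_on \<tau> C \<longrightarrow> inj_on \<sigma> C \<longrightarrow> \<tau> ` C = \<sigma> ` C \<longrightarrow>
        (\<Prod>i\<in>C. sinkhorn_limit uniform_marginal uniform_marginal A $ i $ \<tau> i) * (\<Prod>i\<in>C. A $ i $ \<sigma> i)
      = (\<Prod>i\<in>C. sinkhorn_limit uniform_marginal uniform_marginal A $ i $ \<sigma> i) * (\<Prod>i\<in>C. A $ i $ \<tau> i))"
proof -
  obtain L where lim: "P \<longlonglongrightarrow> L" and admL: "adm L" using P_conv by blast
  have eq: "sinkhorn_limit uniform_marginal uniform_marginal A = L"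
    unfolding sinkhorn_limit_def using lim unfolding P_def[abs_def] by (rule limI)
  have limij: "(\<lambda>k. P k $ i $ j) \<longlonglongrightarrow> L $ i $ j" for i j
    by (intro tendsto_vec_nth lim)
  have cyc: "(\<Prod>i\<in>C. L $ i $ \<tau> i) * (\<Prod>i\<in>C. A $ i $ \<sigma> i)
      = (\<Prod>i\<in>C. L $ i $ \<sigma> i) * (\<Prod>i\<in>C. A $ i $ \<tau> i)"
    if "inj_on \<tau> C" "inj_on \<sigma> C" "\<tau> ` C = \<sigma> ` C" for C \<tau> \<sigma>
  proof -
    have "(\<lambda>k. (\<Prod>i\<in>C. P k $ i $ \<tau> i) * (\<Prod>i\<in>C. A $ i $ \<sigma> i))
        \<longlonglongrightarrow> (\<Prod>i\<in>C. L $ i $ \<tau> i) * (\<Prod>i\<in>C. A $ i $ \<sigma> i)"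
      by (intro tendsto_mult tendsto_prod limij tendsto_const)
    moreover have "(\<lambda>k. (\<Prod>i\<in>C. P k $ i $ \<tau> i) * (\<Prod>i\<in>C. A $ i $ \<sigma> i))
        \<longlonglongrightarrow> (\<Prod>i\<in>C. L $ i $ \<sigma> i) * (\<Prod>i\<in>C. A $ i $ \<tau> i)"
      unfolding P_cycle[OF that]
      by (intro tendsto_mult tendsto_prod limij tendsto_const)
    ultimately show ?thesis by (rule LIMSEQ_unique)
  qed
  show ?thesis unfolding eq using admL cyc unfolding adm_def by blast
qed

end


theorem proposition5:
  fixes M :: "real^'n^'n" and s t :: 'n
  assumes nonneg: "\<forall>i j. M $ i $ j \<ge> 0"
    and posdiag: "\<exists>\<sigma>. positive_diagonal M \<sigma>"
    and not_leading: "\<not> (\<exists>\<sigma>. leading_diagonal M \<sigma> \<and> \<sigma> s = t)"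
  shows "((\<lambda>l. sinkhorn_limit uniform_marginal uniform_marginal (entry_power l M) $ s $ t)
            \<longlongrightarrow> 0) at_top"
proof -
  obtain \<sigma>0 where pd: "positive_diagonal M \<sigma>0" using posdiag by blast
  then have s0perm: "\<sigma>0 permutes UNIV" and s0pos: "\<And>i. M $ i $ \<sigma>0 i > 0"
    by (auto simp: positive_diagonal_def)
  define Al where "Al l = entry_power l M" for l
  have Al_nth: "Al l $ i $ j = M $ i $ j powr l" for l i j by (simp add: Al_def entry_power_def)
  have skl: "sk (Al l) \<sigma>0" for l
  proof unfold_locales
    show "0 \<le> Al l $ i $ j" for i j by (simp add: Al_nth)
    show "\<sigma>0 permutes UNIV" by (rule s0perm)
    show "0 < Al l $ i $ \<sigma>0 i" for i using s0pos[of i] by (simp add: Al_nth)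
  qed
  define B where "B l = sinkhorn_limit uniform_marginal uniform_marginal (Al l)" for l
  have Bnn: "B l $ i $ j \<ge> 0" for l i j
    using sk.limit_props[OF skl, of l] unfolding B_def by blast
  have Brow: "(\<Sum>j\<in>UNIV. B l $ i $ j) = 1 / real CARD('n)" for l i
    using sk.limit_props[OF skl, of l] unfolding B_def by blast
  have Bcol: "(\<Sum>i\<in>UNIV. B l $ i $ j) = 1 / real CARD('n)" for l j
    using sk.limit_props[OF skl, of l] unfolding B_def by blast
  have Bcyc: "(\<Prod>i\<in>C. B l $ i $ \<tau> i) * (\<Prod>i\<in>C. Al l $ i $ \<sigma> i)
      = (\<Prod>i\<in>C. B l $ i $ \<sigma> i) * (\<Prod>i\<in>C. Al l $ i $ \<tau> i)"
    if "inj_on \<tau> C" "inj_on \<sigma> C" "\<tau> ` C = \<sigma> ` C" for l C \<tau> \<sigma>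
    using sk.limit_props[OF skl, of l] that unfolding B_def by blast
  have Ble1: "B l $ i $ j \<le> 1" for l i j
  proof -
    have "B l $ i $ j \<le> (\<Sum>j\<in>UNIV. B l $ i $ j)" by (rule member_le_sum) (auto intro: Bnn)
    also have "\<dots> \<le> 1" unfolding Brow by (simp add: divide_le_eq_1)
    finally show ?thesis .
  qed
  define S where "S = {p. p permutes (UNIV::'n set)}"
  have finS: "finite S" unfolding S_def by (rule finite_permutations) simp
  have s0S: "\<sigma>0 \<in> S" unfolding S_def using s0perm by simp
  define mx where "mx = Max (diag_prod M ` S)"
  have "mx \<in> diag_prod M ` S" unfolding mx_def using finS s0S by (intro Max_in) auto
  then obtain \<sigma>s where ssS: "\<sigma>s \<in> S" and ssmx: "diag_prod M \<sigma>s = mx" by auto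
  have maxp: "diag_prod M \<tau> \<le> diag_prod M \<sigma>s" if "\<tau> permutes UNIV" for \<tau>
    unfolding ssmx mx_def using finS that by (intro Max_ge) (auto simp: S_def)
  have ssperm: "\<sigma>s permutes UNIV" using ssS unfolding S_def by simp
  have "leading_diagonal M \<sigma>s" unfolding leading_diagonal_def using ssperm maxp by blast
  then have ss_t: "\<sigma>s s \<noteq> t" using not_leading by blast
  have strict: "diag_prod M \<tau> < diag_prod M \<sigma>s" if "\<tau> permutes UNIV" "\<tau> s = t" for \<tau>
  proof (rule ccontr)
    assume "\<not> ?thesis"
    then have "diag_prod M \<sigma>s \<le> diag_prod M \<tau>" by simp
    then have "leading_diagonal M \<tau>" unfolding leading_diagonal_def
      using that(1) maxp order_trans by blast
    with that(2) not_leading show False by blast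
  qed
  have "diag_prod M \<sigma>0 > 0" unfolding diag_prod_def by (rule prod_pos) (use s0pos in auto)
  then have dpos: "diag_prod M \<sigma>s > 0" using maxp[OF s0perm] by simp
  have Mss: "M $ i $ \<sigma>s i > 0" for i
  proof (rule ccontr)
    assume "\<not> ?thesis"
    then have "M $ i $ \<sigma>s i = 0" using nonneg by (meson antisym not_le)
    then have "diag_prod M \<sigma>s = 0" unfolding diag_prod_def by (auto simp: prod_zero_iff)
    with dpos show False by simp
  qed
  have goal_eq: "(\<lambda>l. sinkhorn_limit uniform_marginal uniform_marginal (entry_power l M) $ s $ t)
      = (\<lambda>l. B l $ s $ t)" unfolding B_def Al_def by simp
  show ?thesis unfolding goal_eq
  proof (rule ccontr)
    assume nt: "\<not> ((\<lambda>l. B l $ s $ t) \<longlongrightarrow> 0) at_top"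
    then obtain \<epsilon> :: real where ep: "\<epsilon> > 0"
      and freq: "\<not> eventually (\<lambda>l. dist (B l $ s $ t) 0 < \<epsilon>) at_top"
      unfolding tendsto_iff by blast
    have "\<forall>m::nat. \<exists>l. l \<ge> real m \<and> \<epsilon> \<le> B l $ s $ t"
    proof
      fix m :: nat
      from freq obtain l where "l \<ge> real m" "\<not> dist (B l $ s $ t) 0 < \<epsilon>"
        unfolding eventually_at_top_linorder by blast
      then show "\<exists>l. l \<ge> real m \<and> \<epsilon> \<le> B l $ s $ t" using Bnn[of l s t] by auto
    qed
    then obtain lam where lam: "\<And>m. lam m \<ge> real m" "\<And>m. \<epsilon> \<le> B (lam m) $ s $ t"
      by metis
    define Y where "Y m = B (lam m)" for m
    have "bounded (range Y)" unfolding Y_def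
      by (rule bounded_mat) (auto simp: abs_le_iff intro: Ble1 order_trans[OF _ Bnn])
    then obtain Bb r where sm: "strict_mono r" and limY: "(Y \<circ> r) \<longlonglongrightarrow> Bb"
      using bounded_imp_convergent_subsequence by blast
    have limij: "(\<lambda>m. Y (r m) $ i $ j) \<longlonglongrightarrow> Bb $ i $ j" for i j
      using tendsto_vec_nth[OF tendsto_vec_nth[OF limY]] by (simp add: comp_def)
    have Bbnn: "Bb $ i $ j \<ge> 0" for i j
      by (rule LIMSEQ_le_const[OF limij]) (auto simp: Y_def intro: Bnn)
    have Bbst: "Bb $ s $ t \<ge> \<epsilon>"
      by (rule LIMSEQ_le_const[OF limij]) (auto simp: Y_def intro: lam)
    have Bbrow: "(\<Sum>j\<in>UNIV. Bb $ i $ j) = 1 / real CARD('n)" for i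
    proof -
      have "(\<lambda>m. \<Sum>j\<in>UNIV. Y (r m) $ i $ j) \<longlonglongrightarrow> (\<Sum>j\<in>UNIV. Bb $ i $ j)"
        by (intro tendsto_sum limij)
      then show ?thesis by (simp add: Y_def Brow LIMSEQ_const_iff)
    qed
    have Bbcol: "(\<Sum>i\<in>UNIV. Bb $ i $ j) = 1 / real CARD('n)" for j
    proof -
      have "(\<lambda>m. \<Sum>i\<in>UNIV. Y (r m) $ i $ j) \<longlonglongrightarrow> (\<Sum>i\<in>UNIV. Bb $ i $ j)"
        by (intro tendsto_sum limij)
      then show ?thesis by (simp add: Y_def Bcol LIMSEQ_const_iff)
    qed
    define b0 where "b0 = inv \<sigma>s t"
    have ssb0: "\<sigma>s b0 = t" unfolding b0_def using ssperm by (simp add: permutes_inverses(1))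
    have sb0: "s \<noteq> b0" using ss_t ssb0 by auto
    have "\<exists>\<pi>. \<pi> permutes UNIV \<and> \<pi> s = b0 \<and> (\<forall>i. \<pi> i \<noteq> i \<longrightarrow> Bb $ i $ \<sigma>s (\<pi> i) > 0)"
    proof (rule circulation_cycle[where f = "\<lambda>i i'. Bb $ i $ \<sigma>s i'"])
      show "0 \<le> Bb $ i $ \<sigma>s j" for i j by (rule Bbnn)
      show "(\<Sum>j\<in>UNIV. Bb $ i $ \<sigma>s j) = (\<Sum>j\<in>UNIV. Bb $ j $ \<sigma>s i)" for i
      proof -
        have "(\<Sum>j\<in>UNIV. Bb $ i $ \<sigma>s j) = (\<Sum>j\<in>UNIV. Bb $ i $ j)"
          using sum.permute[OF ssperm, of "\<lambda>j. Bb $ i $ j"] by (simp add: comp_def)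
        then show ?thesis using Bbrow Bbcol by simp
      qed
      show "0 < Bb $ s $ \<sigma>s b0" using Bbst ep ssb0 by simp
    qed (rule sb0)
    then obtain \<pi> where piperm: "\<pi> permutes UNIV" and pis: "\<pi> s = b0"
      and good: "\<And>i. \<pi> i \<noteq> i \<Longrightarrow> Bb $ i $ \<sigma>s (\<pi> i) > 0" by blast
    define \<tau> where "\<tau> = \<sigma>s \<circ> \<pi>"
    define C where "C = {i. \<pi> i \<noteq> i}"
    have tperm: "\<tau> permutes UNIV" unfolding \<tau>_def by (rule permutes_compose[OF piperm ssperm])
    have ts: "\<tau> s = t" unfolding \<tau>_def using pis ssb0 by simp
    have piinj: "inj \<pi>" using piperm by (rule permutes_inj)
    have piC: "\<pi> ` C = C"
    proof
      show "\<pi> ` C \<subseteq> C" unfolding C_def using piinj by (auto dest: injD)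
      show "C \<subseteq> \<pi> ` C"
      proof
        fix x assume x: "x \<in> C"
        have "\<pi> (inv \<pi> x) = x" using piperm by (simp add: permutes_inverses(1))
        moreover then have "inv \<pi> x \<in> C" using x unfolding C_def by auto
        ultimately show "x \<in> \<pi> ` C" by (metis imageI)
      qed
    qed
    have tC: "\<tau> ` C = \<sigma>s ` C" unfolding \<tau>_def using piC by (metis image_comp)
    have tinj: "inj_on \<tau> C" using permutes_inj[OF tperm] by (rule inj_on_subset) simp
    have sinj: "inj_on \<sigma>s C" using permutes_inj[OF ssperm] by (rule inj_on_subset) simp
    define a where "a = (\<Prod>i\<in>C. M $ i $ \<sigma>s i)"
    define b where "b = (\<Prod>i\<in>C. M $ i $ \<tau> i)"
    define c where "c = (\<Prod>i\<in>UNIV - C. M $ i $ \<sigma>s i)"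
    have apos: "a > 0" unfolding a_def by (rule prod_pos) (use Mss in auto)
    have cpos: "c > 0" unfolding c_def by (rule prod_pos) (use Mss in auto)
    have bnn: "b \<ge> 0" unfolding b_def by (rule prod_nonneg) (use nonneg in auto)
    have "diag_prod M \<tau> = c * b"
    proof -
      have "diag_prod M \<tau> = (\<Prod>i\<in>UNIV - C. M $ i $ \<tau> i) * b"
        unfolding diag_prod_def b_def by (rule prod.subset_diff) auto
      moreover have "(\<Prod>i\<in>UNIV - C. M $ i $ \<tau> i) = c"
        unfolding c_def C_def \<tau>_def by (rule prod.cong) auto
      ultimately show ?thesis by simp
    qed
    moreover have "diag_prod M \<sigma>s = c * a"
      unfolding diag_prod_def a_def c_def by (rule prod.subset_diff) auto
    ultimately have "c * b < c * a" using strict[OF tperm ts] by simp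
    then have ba: "b < a" using cpos by simp
    define q where "q = b / a"
    have q01: "0 \<le> q" "q < 1" unfolding q_def using apos bnn ba by auto
    define X where "X m = (\<Prod>i\<in>C. Y (r m) $ i $ \<tau> i)" for m
    have Xub: "X m \<le> q powr (lam (r m))" for m
    proof -
      define l where "l = lam (r m)"
      have pa: "(\<Prod>i\<in>C. Al l $ i $ \<sigma>s i) = a powr l"
        unfolding a_def Al_nth by (simp add: prod_powr_distrib)
      have pb: "(\<Prod>i\<in>C. Al l $ i $ \<tau> i) = b powr l"
        unfolding b_def Al_nth by (simp add: prod_powr_distrib)
      have Z1: "(\<Prod>i\<in>C. B l $ i $ \<sigma>s i) \<le> 1" by (rule prod_le_1) (auto intro: Bnn Ble1)
      have Z0: "(\<Prod>i\<in>C. B l $ i $ \<sigma>s i) \<ge> 0" by (rule prod_nonneg) (auto intro: Bnn)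
      have eq: "X m * a powr l = (\<Prod>i\<in>C. B l $ i $ \<sigma>s i) * b powr l"
        using Bcyc[OF tinj sinj tC, of l] unfolding X_def Y_def l_def[symmetric] pa pb .
      have apl: "a powr l > 0" using apos by simp
      have "X m = (\<Prod>i\<in>C. B l $ i $ \<sigma>s i) * b powr l / a powr l"
        using eq apl by (simp add: field_simps)
      also have "\<dots> \<le> 1 * b powr l / a powr l"
        using Z1 apl by (intro divide_right_mono mult_right_mono) auto
      also have "\<dots> = q powr l" unfolding q_def using apos bnn by (simp add: powr_divide)
      finally show ?thesis unfolding l_def .
    qed
    have Xlb: "X m \<ge> 0" for m unfolding X_def Y_def by (rule prod_nonneg) (auto intro: Bnn)
    have qm: "q powr (lam (r m)) \<le> q ^ m" for m
    proof (cases "q = 0")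
      case True then show ?thesis by simp
    next
      case False
      then have qp: "q > 0" using q01 by simp
      have "real m \<le> lam (r m)" using lam(1)[of "r m"] seq_suble[OF sm, of m] by linarith
      then have "q powr (lam (r m)) \<le> q powr (real m)" using q01 by (intro powr_mono') auto
      also have "\<dots> = q ^ m" using qp by (simp add: powr_realpow)
      finally show ?thesis .
    qed
    have "X \<longlonglongrightarrow> 0"
    proof (rule tendsto_sandwich[of "\<lambda>_. 0" _ _ "\<lambda>m. q ^ m"])
      show "\<forall>\<^sub>F m in sequentially. 0 \<le> X m" using Xlb by simp
      show "\<forall>\<^sub>F m in sequentially. X m \<le> q ^ m" using order_trans[OF Xub qm] by (simp add: always_eventually)
      show "(\<lambda>m. q ^ m) \<longlonglongrightarrow> 0" using q01 by (intro LIMSEQ_power_zero) auto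
    qed simp
    moreover have "X \<longlonglongrightarrow> (\<Prod>i\<in>C. Bb $ i $ \<tau> i)"
      unfolding X_def by (intro tendsto_prod limij)
    ultimately have "(\<Prod>i\<in>C. Bb $ i $ \<tau> i) = 0" using LIMSEQ_unique by blast
    moreover have "(\<Prod>i\<in>C. Bb $ i $ \<tau> i) > 0"
      by (rule prod_pos) (auto simp: C_def \<tau>_def intro: good)
    ultimately show False by linarith
  qed
qed

end
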